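(* In the setting of the quantum deformed-oscillator realization ($\mathcal A$, $f\mapsto f(N)$, $b$, $b^\dagger$, $\Phi$, and $\mathbf A,\mathbf B,\mathbf C$ built from functions $A,h,\rho:\mathbb Z\to\mathbb C$), assume for all $n\in\mathbb Z$ conditions (q1) $(\Delta A(n))^2=\delta+\beta(A(n)+A(n+1))$, (q2) $\sum_{i=1}^{L+1}\alpha_iA(n)^i+\delta h(n)+\epsilon+2\beta A(n)h(n)=0$, (q3) $\Delta A(n)-\Delta A(n+1)=-\beta$, and (q4) $\Delta A(n)(h(n+1)-h(n))=-\beta(h(n+1)+h(n))+\sum_{i=1}^{L}\omega_i(A(n+1)^i+A(n)^i)+\eta$. Let $k_1,\dots,k_{M+1}\in\mathbb C$ be arbitrary and $$K=\mathbf C^2-\sum_{i=1}^{L+1}\alpha_i\{\mathbf A^i,\mathbf B\}-\beta\sum_{i=1}^{L}\omega_i\{\mathbf A^i,\mathbf B\}-\beta\{\mathbf A,\mathbf B^2\}+\sum_{i=1}^{M+1}k_i\mathbf A^i-(2\epsilon+\beta\eta)\mathbf B+(\beta^2-\delta)\mathbf B^2 .$$ Then $K=\kappa(N)$, where $$\begin{aligned}\kappa(n)={}&-(\Delta A(n-1))^2\rho(n-1)^2\Phi(n)-(\Delta A(n))^2\rho(n)^2\Phi(n+1)-2\sum_{i=1}^{L+1}\alpha_iA(n)^ih(n)-2\beta\sum_{i=1}^{L}\omega_iA(n)^ih(n)\\&-2\beta A(n)h(n)^2-2\beta A(n)\big(\rho(n-1)^2\Phi(n)+\rho(n)^2\P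hi(n+1)\big)+\sum_{i=1}^{M+1}k_iA(n)^i-(2\epsilon+\beta\eta)h(n)\\&+(\beta^2-\delta)\big(h(n)^2+\rho(n-1)^2\Phi(n)+\rho(n)^2\Phi(n+1)\big).\end{aligned}$$
   Context: Setting: $M\ge1$, $L=\lfloor M/2\rfloor$, complex constants $\alpha_1,\dots,\alpha_{L+1},\beta,\delta,\epsilon,\eta,\omega_1,\dots,\omega_L$. $\mathcal A$ is a unital associative algebra over $\mathbb C$ with elements $b,b^\dagger$ and a unital algebra homomorphism $f\mapsto f(N)$ from functions $\mathbb Z\to\mathbb C$ into $\mathcal A$ with $f(N)b^\dagger=b^\dagger f(N+1)$, $f(N)b=bf(N-1)$, $b^\dagger b=\Phi(N)$, $bb^\dagger=\Phi(N+1)$. $\Delta A(n)=A(n+1)-A(n)$, $\mathbf A=A(N)$, $\mathbf B=h(N)+b^\dagger\rho(N)+\rho(N)b$, $\mathbf C=b^\dagger\Delta A(N)\rho(N)-\rho(N)\Delta A(N)b$. $[X,Y]=XY-YX$, $\{X,Y\}=XY+YX$. The function $h$ is the paper's $b(N)$. *)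

theory Defs
  imports Complex_Main
begin

definition acomm :: "'a::ring \<Rightarrow> 'a \<Rightarrow> 'a" where
  "acomm X Y = X * Y + Y * X"

definition fdiff :: "(int \<Rightarrow> complex) \<Rightarrow> int \<Rightarrow> complex" where
  "fdiff A n = A (n + 1) - A n"

text \<open>A unital algebra homomorphism from functions on the integers (pointwise
  operations) into the algebra; complex scalars act through constant functions,
  which are required to be central.\<close>
definition calc_hom :: "((int \<Rightarrow> complex) \<Rightarrow> 'a::ring_1) \<Rightarrow> bool" where
  "calc_hom F \<longleftrightarrow>
     (\<forall>f g. F (\<lambda>n. f n + g n) = F f + F g) \<and>
     (\<forall>f g. F (\<lambda>n. f n * g n) = F f * F g) \<and>
     F (\<lambda>n. 1) = 1 \<and>
     (\<forall>c x. F (\<lambda>n. c) * x = x * F (\<lambda>n. c))"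

end

theory Submission imports Defs begin

locale osc =
  fixes F :: "(int \<Rightarrow> complex) \<Rightarrow> 'a::ring_1" and b bd :: 'a and \<Phi> :: "int \<Rightarrow> complex"
  assumes hom: "calc_hom F"
    and comm_bd: "\<And>f. F f * bd = bd * F (\<lambda>n. f (n + 1))"
    and comm_b: "\<And>f. F f * b = b * F (\<lambda>n. f (n - 1))"
    and bdb: "bd * b = F \<Phi>"
    and bbd: "b * bd = F (\<lambda>n. \<Phi> (n + 1))"
begin

lemma F_add: "F (\<lambda>n. f n + g n) = F f + F g" using hom unfolding calc_hom_def by blast
lemma F_mult: "F (\<lambda>n. f n * g n) = F f * F g" using hom unfolding calc_hom_def by blast
lemma F_mult': "F f * F g = F (\<lambda>n. f n * g n)" by (simp add: F_mult)
lemma F_zero: "F (\<lambda>n. 0) = 0"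
proof -
  have "F (\<lambda>n. 0 + 0) = F (\<lambda>n. 0) + F (\<lambda>n. 0)" by (rule F_add)
  then show ?thesis by simp
qed
lemma F_add': "F f + F g = F (\<lambda>n. f n + g n)" by (simp add: F_add)
lemma F_uminus: "F (\<lambda>n. - f n) = - F f"
proof -
  have "F (\<lambda>n. - f n + f n) = F (\<lambda>n. - f n) + F f" by (rule F_add)
  then show ?thesis by (simp add: F_zero eq_neg_iff_add_eq_0)
qed
lemma F_diff': "F f - F g = F (\<lambda>n. f n - g n)"
  using F_add[of f "\<lambda>n. - g n"] F_uminus[of g] by simp
lemma F_sum: "(\<Sum>i\<in>S. F (f i)) = F (\<lambda>n. \<Sum>i\<in>S. f i n)"
proof (induction S rule: infinite_finite_induct)
  case (infinite A) then show ?case by (simp add: F_zero)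
next
  case empty then show ?case by (simp add: F_zero)
next
  case (insert x F) then show ?case by (simp add: F_add')
qed
lemma F_pow: "F f ^ i = F (\<lambda>n. f n ^ i)"
proof (induction i)
  case 0 then show ?case using hom unfolding calc_hom_def by simp
next
  case (Suc i) then show ?case by (simp add: F_mult')
qed

lemma bd_F: "bd * F g = F (\<lambda>n. g (n - 1)) * bd" using comm_bd[of "\<lambda>n. g (n - 1)"] by simp
lemma b_F: "b * F g = F (\<lambda>n. g (n + 1)) * b" using comm_b[of "\<lambda>n. g (n + 1)"] by simp

definition nf where
  "nf g2 g1 g0 h1 h2 = bd * bd * F g2 + bd * F g1 + F g0 + F h1 * b + F h2 * b * b"

lemma nf_cong: "g2 = g2' \<Longrightarrow> g1 = g1' \<Longrightarrow> g0 = g0' \<Longrightarrow> h1 = h1' \<Longrightarrow> h2 = h2' \<Longrightarrow>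
  nf g2 g1 g0 h1 h2 = nf g2' g1' g0' h1' h2'" by simp

lemma nf_F0: "nf (\<lambda>n. 0) (\<lambda>n. 0) g (\<lambda>n. 0) (\<lambda>n. 0) = F g"
  by (simp add: nf_def F_zero)

lemma nf_add: "nf g2 g1 g0 h1 h2 + nf g2' g1' g0' h1' h2' =
  nf (\<lambda>n. g2 n + g2' n) (\<lambda>n. g1 n + g1' n) (\<lambda>n. g0 n + g0' n) (\<lambda>n. h1 n + h1' n) (\<lambda>n. h2 n + h2' n)"
  by (simp add: nf_def F_add algebra_simps)

lemma nf_diff: "nf g2 g1 g0 h1 h2 - nf g2' g1' g0' h1' h2' =
  nf (\<lambda>n. g2 n - g2' n) (\<lambda>n. g1 n - g1' n) (\<lambda>n. g0 n - g0' n) (\<lambda>n. h1 n - h1' n) (\<lambda>n. h2 n - h2' n)"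
  by (simp add: nf_def F_diff'[symmetric] algebra_simps)

lemma nf_sum: "(\<Sum>i\<in>S. nf (g2 i) (g1 i) (g0 i) (h1 i) (h2 i)) =
  nf (\<lambda>n. \<Sum>i\<in>S. g2 i n) (\<lambda>n. \<Sum>i\<in>S. g1 i n) (\<lambda>n. \<Sum>i\<in>S. g0 i n) (\<lambda>n. \<Sum>i\<in>S. h1 i n) (\<lambda>n. \<Sum>i\<in>S. h2 i n)"
proof (induction S rule: infinite_finite_induct)
  case (infinite A) then show ?case by (simp add: nf_def F_zero)
next
  case empty then show ?case by (simp add: nf_def F_zero)
next
  case (insert x S) then show ?case by (simp add: nf_add)
qed

lemma F_nf: "F a * nf g2 g1 g0 h1 h2 =
  nf (\<lambda>n. a (n+2) * g2 n) (\<lambda>n. a (n+1) * g1 n) (\<lambda>n. a n * g0 n) (\<lambda>n. a n * h1 n) (\<lambda>n. a n * h2 n)"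
proof -
  have 1: "F a * (bd * bd * F g2) = bd * bd * F (\<lambda>n. a (n+2) * g2 n)"
  proof -
    have "F a * (bd * bd * F g2) = bd * (F (\<lambda>n. a (n + 1)) * bd) * F g2"
      using comm_bd[of a] by (metis mult.assoc)
    also have "\<dots> = bd * bd * (F (\<lambda>n. a (n + 2)) * F g2)"
    proof -
      have "F (\<lambda>n. a (n + 1)) * bd = bd * F (\<lambda>n. a (n + 2))"
        using comm_bd[of "\<lambda>n. a (n + 1)"] by (simp add: add.assoc)
      then show ?thesis by (metis mult.assoc)
    qed
    finally show ?thesis by (simp add: F_mult')
  qed
  have 2: "F a * (bd * F g1) = bd * F (\<lambda>n. a (n+1) * g1 n)"
    by (simp add: mult.assoc[symmetric] comm_bd) (simp add: mult.assoc F_mult')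
  show ?thesis unfolding nf_def
    by (simp add: distrib_left 1 2) (simp add: mult.assoc[symmetric] F_mult')
qed

lemma nf_F: "nf g2 g1 g0 h1 h2 * F a =
  nf (\<lambda>n. g2 n * a n) (\<lambda>n. g1 n * a n) (\<lambda>n. g0 n * a n) (\<lambda>n. h1 n * a (n+1)) (\<lambda>n. h2 n * a (n+2))"
proof -
  have 1: "F h2 * b * b * F a = F (\<lambda>n. h2 n * a (n+2)) * b * b"
  proof -
    have "F h2 * b * b * F a = F h2 * (b * F (\<lambda>n. a (n + 1))) * b"
      using b_F[of a] by (metis mult.assoc)
    also have "\<dots> = (F h2 * F (\<lambda>n. a (n + 2))) * b * b"
    proof -
      have "b * F (\<lambda>n. a (n + 1)) = F (\<lambda>n. a (n + 2)) * b"
        using b_F[of "\<lambda>n. a (n + 1)"] by (simp add: add.assoc)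
      then show ?thesis by (metis mult.assoc)
    qed
    finally show ?thesis by (simp add: F_mult')
  qed
  have 2: "F h1 * b * F a = F (\<lambda>n. h1 n * a (n+1)) * b"
    by (simp add: mult.assoc b_F) (simp add: mult.assoc[symmetric] F_mult')
  show ?thesis unfolding nf_def
    by (simp add: distrib_right 1 2) (simp add: mult.assoc F_mult')
qed

lemma m1: "bd * F f * (bd * F g) = nf (\<lambda>n. f (n+1) * g n) (\<lambda>n. 0) (\<lambda>n. 0) (\<lambda>n. 0) (\<lambda>n. 0)"
proof -
  have "bd * F f * (bd * F g) = bd * (F f * bd) * F g" by (simp add: mult.assoc)
  also have "\<dots> = bd * bd * (F (\<lambda>n. f (n+1)) * F g)" by (simp add: comm_bd mult.assoc)
  finally show ?thesis by (simp add: nf_def F_zero F_mult')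
qed
lemma m2: "bd * F f * F g = nf (\<lambda>n. 0) (\<lambda>n. f n * g n) (\<lambda>n. 0) (\<lambda>n. 0) (\<lambda>n. 0)"
  by (simp add: nf_def F_zero F_mult' mult.assoc)
lemma m3: "bd * F f * (F g * b) = nf (\<lambda>n. 0) (\<lambda>n. 0) (\<lambda>n. \<Phi> n * (f (n-1) * g (n-1))) (\<lambda>n. 0) (\<lambda>n. 0)"
proof -
  have "bd * F f * (F g * b) = bd * (F (\<lambda>n. f n * g n) * b)" by (simp add: F_mult mult.assoc)
  also have "\<dots> = bd * b * F (\<lambda>n. f (n-1) * g (n-1))" by (simp add: comm_b mult.assoc)
  finally show ?thesis by (simp add: nf_def F_zero F_mult' bdb)
qed
lemma m4: "F f * (bd * F g) = nf (\<lambda>n. 0) (\<lambda>n. f (n+1) * g n) (\<lambda>n. 0) (\<lambda>n. 0) (\<lambda>n. 0)"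
proof -
  have "F f * (bd * F g) = bd * (F (\<lambda>n. f (n+1)) * F g)" by (simp add: comm_bd mult.assoc[symmetric])
  then show ?thesis by (simp add: nf_def F_zero F_mult')
qed
lemma m5: "F f * F g = nf (\<lambda>n. 0) (\<lambda>n. 0) (\<lambda>n. f n * g n) (\<lambda>n. 0) (\<lambda>n. 0)"
  by (simp add: nf_def F_zero F_mult')
lemma m6: "F f * (F g * b) = nf (\<lambda>n. 0) (\<lambda>n. 0) (\<lambda>n. 0) (\<lambda>n. f n * g n) (\<lambda>n. 0)"
  by (simp add: nf_def F_zero F_mult' mult.assoc[symmetric])
lemma m7: "F f * b * (bd * F g) = nf (\<lambda>n. 0) (\<lambda>n. 0) (\<lambda>n. f n * (\<Phi> (n+1) * g n)) (\<lambda>n. 0) (\<lambda>n. 0)"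
proof -
  have "F f * b * (bd * F g) = F f * (b * bd) * F g" by (simp add: mult.assoc)
  then show ?thesis by (simp add: nf_def F_zero F_mult' bbd mult.assoc)
qed
lemma m8: "F f * b * F g = nf (\<lambda>n. 0) (\<lambda>n. 0) (\<lambda>n. 0) (\<lambda>n. f n * g (n+1)) (\<lambda>n. 0)"
proof -
  have "F f * b * F g = F f * (b * F g)" by (simp add: mult.assoc)
  also have "\<dots> = F f * F (\<lambda>n. g (n+1)) * b" by (simp add: b_F mult.assoc)
  finally show ?thesis by (simp add: nf_def F_zero F_mult')
qed
lemma m9: "F f * b * (F g * b) = nf (\<lambda>n. 0) (\<lambda>n. 0) (\<lambda>n. 0) (\<lambda>n. 0) (\<lambda>n. f n * g (n+1))"
proof -
  have "F f * b * (F g * b) = F f * (b * F g) * b" by (simp add: mult.assoc)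
  also have "\<dots> = F f * F (\<lambda>n. g (n+1)) * b * b" by (simp add: b_F mult.assoc)
  finally show ?thesis by (simp add: nf_def F_zero F_mult')
qed

lemma nf_mult1: "nf (\<lambda>n. 0) g1 g0 h1 (\<lambda>n. 0) * nf (\<lambda>n. 0) g1' g0' h1' (\<lambda>n. 0) =
  nf (\<lambda>n. g1 (n+1) * g1' n) (\<lambda>n. g1 n * g0' n + g0 (n+1) * g1' n)
     (\<lambda>n. \<Phi> n * (g1 (n-1) * h1' (n-1)) + g0 n * g0' n + h1 n * (\<Phi> (n+1) * g1' n))
     (\<lambda>n. g0 n * h1' n + h1 n * g0' (n+1)) (\<lambda>n. h1 n * h1' (n+1))"
(is "?lhs = ?rhs")
proof -
  have e: "nf (\<lambda>n. 0) g1 g0 h1 (\<lambda>n. 0) = bd * F g1 + F g0 + F h1 * b" for g1 g0 h1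
    by (simp add: nf_def F_zero)
  have "nf (\<lambda>n. 0) g1 g0 h1 (\<lambda>n. 0) * nf (\<lambda>n. 0) g1' g0' h1' (\<lambda>n. 0) =
    bd * F g1 * (bd * F g1') + bd * F g1 * F g0' + bd * F g1 * (F h1' * b)
    + (F g0 * (bd * F g1') + F g0 * F g0' + F g0 * (F h1' * b))
    + (F h1 * b * (bd * F g1') + F h1 * b * F g0' + F h1 * b * (F h1' * b))"
    unfolding e by (simp add: distrib_left distrib_right add.assoc)
  also have "\<dots> = ?rhs"
    unfolding m1 m2 m3 m4 m5 m6 m7 m8 m9 nf_add
    by (rule nf_cong) (auto simp: fun_eq_iff algebra_simps)
  finally show ?thesis .
qed

end

theorem proposition8:
  fixes M :: nat and L :: nat
    and \<alpha> \<omega> k :: "nat \<Rightarrow> complex"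
    and \<beta> \<delta> \<epsilon> \<eta> :: complex
    and F :: "(int \<Rightarrow> complex) \<Rightarrow> 'a::ring_1"
    and b bd AA BB CC K :: 'a
    and \<Phi> A h \<rho> :: "int \<Rightarrow> complex"
  assumes M1: "M \<ge> 1" and Ldef: "L = M div 2"
    and hom: "calc_hom F"
    and comm_bd: "\<And>f. F f * bd = bd * F (\<lambda>n. f (n + 1))"
    and comm_b: "\<And>f. F f * b = b * F (\<lambda>n. f (n - 1))"
    and bdb: "bd * b = F \<Phi>"
    and bbd: "b * bd = F (\<lambda>n. \<Phi> (n + 1))"
    and q1: "\<And>n. (fdiff A n) ^ 2 = \<delta> + \<beta> * (A n + A (n + 1))"
    and q2: "\<And>n. (\<Sum>i=1..L+1. \<alpha> i * A n ^ i) + \<delta> * h n + \<epsilon> + 2 * \<beta> * A n * h n = 0"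
    and q3: "\<And>n. fdiff A n - fdiff A (n + 1) = - \<beta>"
    and q4: "\<And>n. fdiff A n * (h (n + 1) - h n)
               = - \<beta> * (h (n + 1) + h n) + (\<Sum>i=1..L. \<omega> i * (A (n + 1) ^ i + A n ^ i)) + \<eta>"
    and AAdef: "AA = F A"
    and BBdef: "BB = F h + bd * F \<rho> + F \<rho> * b"
    and CCdef: "CC = bd * F (fdiff A) * F \<rho> - F \<rho> * F (fdiff A) * b"
    and Kdef: "K = CC ^ 2
          - (\<Sum>i=1..L+1. F (\<lambda>n. \<alpha> i) * acomm (AA ^ i) BB)
          - F (\<lambda>n. \<beta>) * (\<Sum>i=1..L. F (\<lambda>n. \<omega> i) * acomm (AA ^ i) BB)
          - F (\<lambda>n. \<beta>) * acomm AA (BB ^ 2)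
          + (\<Sum>i=1..M+1. F (\<lambda>n. k i) * AA ^ i)
          - F (\<lambda>n. 2 * \<epsilon> + \<beta> * \<eta>) * BB
          + F (\<lambda>n. \<beta> ^ 2 - \<delta>) * BB ^ 2"
  defines "\<kappa> \<equiv> \<lambda>n.
            0 - (fdiff A (n - 1)) ^ 2 * \<rho> (n - 1) ^ 2 * \<Phi> n
            - (fdiff A n) ^ 2 * \<rho> n ^ 2 * \<Phi> (n + 1)
            - 2 * (\<Sum>i=1..L+1. \<alpha> i * A n ^ i * h n)
            - 2 * \<beta> * (\<Sum>i=1..L. \<omega> i * A n ^ i * h n)
            - 2 * \<beta> * A n * (h n) ^ 2
            - 2 * \<beta> * A n * (\<rho> (n - 1) ^ 2 * \<Phi> n + \<rho> n ^ 2 * \<Phi> (n + 1))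
            + (\<Sum>i=1..M+1. k i * A n ^ i)
            - (2 * \<epsilon> + \<beta> * \<eta>) * h n
            + (\<beta> ^ 2 - \<delta>) * ((h n) ^ 2 + \<rho> (n - 1) ^ 2 * \<Phi> n + \<rho> n ^ 2 * \<Phi> (n + 1))"
  shows "K = F \<kappa>"
proof -
  interpret osc F b bd \<Phi> using hom comm_bd comm_b bdb bbd by unfold_locales auto
  define Z :: "int \<Rightarrow> complex" where "Z = (\<lambda>n. 0)"
  have hB: "BB = nf Z \<rho> h \<rho> Z" unfolding BBdef nf_def Z_def by (simp add: F_zero)
  have hC: "CC = nf Z (\<lambda>n. fdiff A n * \<rho> n) Z (\<lambda>n. - (\<rho> n * fdiff A n)) Z"
    unfolding CCdef nf_def Z_def by (simp add: F_zero F_mult' mult.assoc F_uminus)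
  have hA: "AA ^ i = F (\<lambda>n. A n ^ i)" for i unfolding AAdef by (simp add: F_pow)
  have hk: "(\<Sum>i=1..M+1. F (\<lambda>n. k i) * AA ^ i) = nf Z Z (\<lambda>n. \<Sum>i=1..M+1. k i * A n ^ i) Z Z"
    unfolding hA by (simp add: F_mult' F_sum nf_def Z_def F_zero)
  have hFk: "F \<kappa> = nf Z Z \<kappa> Z Z" by (simp add: nf_def Z_def F_zero)
  have ac: "acomm X Y = X * Y + Y * X" for X Y :: 'a by (simp add: acomm_def)
  have key: "fdiff A (n+1) * fdiff A n = \<delta> + \<beta> * (A n + A (n+2)) - \<beta>^2" for n
  proof -
    have a: "A (n+1) - A n - (A (n+2) - A (n+1)) = - \<beta>"
      using q3[of n] by (simp add: fdiff_def add.assoc)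
    have c: "(A (n+1) - A n)^2 = \<delta> + \<beta> * (A n + A (n + 1))"
      using q1[of n] by (simp add: fdiff_def)
    have d: "fdiff A (n+1) = A (n+2) - A (n+1)" by (simp add: fdiff_def add.assoc)
    show ?thesis unfolding d using a c by (simp add: fdiff_def) algebra
  qed
  have dd: "fdiff A n = A (n+1) - A n" for n by (simp add: fdiff_def)
  have sa1: "(\<Sum>i = 1..L + 1. \<alpha> i * (A (n + 1) ^ i * \<rho> n + \<rho> n * A n ^ i))
     = \<rho> n * ((\<Sum>i = 1..L + 1. \<alpha> i * A (n + 1) ^ i) + (\<Sum>i = 1..L + 1. \<alpha> i * A n ^ i))" for n
    by (simp add: sum_distrib_left sum.distrib[symmetric] algebra_simps)
  have sa2: "(\<Sum>i = 1..L + 1. \<alpha> i * (A n ^ i * \<rho> n + \<rho> n * A (n + 1) ^ i))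
     = \<rho> n * ((\<Sum>i = 1..L + 1. \<alpha> i * A (n + 1) ^ i) + (\<Sum>i = 1..L + 1. \<alpha> i * A n ^ i))" for n
    by (simp add: sum_distrib_left sum.distrib[symmetric] algebra_simps)
  have sw1: "(\<Sum>i = 1..L. \<omega> i * (A (n + 1) ^ i * \<rho> n + \<rho> n * A n ^ i))
     = \<rho> n * (\<Sum>i = 1..L. \<omega> i * (A (n + 1) ^ i + A n ^ i))" for n
    by (simp add: sum_distrib_left algebra_simps)
  have sw2: "(\<Sum>i = 1..L. \<omega> i * (A n ^ i * \<rho> n + \<rho> n * A (n + 1) ^ i))
     = \<rho> n * (\<Sum>i = 1..L. \<omega> i * (A (n + 1) ^ i + A n ^ i))" for n
    by (simp add: sum_distrib_left algebra_simps)
  have s3a: "(\<Sum>i = 1..L + 1. \<alpha> i * (A n ^ i * h n + h n * A n ^ i))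
     = 2 * (\<Sum>i = 1..L + 1. \<alpha> i * A n ^ i * h n)" for n
    by (simp add: sum_distrib_left algebra_simps)
  have s3w: "(\<Sum>i = 1..L. \<omega> i * (A n ^ i * h n + h n * A n ^ i))
     = 2 * (\<Sum>i = 1..L. \<omega> i * A n ^ i * h n)" for n
    by (simp add: sum_distrib_left algebra_simps)
  show ?thesis
    unfolding Kdef hk hFk
    unfolding hA
    unfolding power2_eq_square ac AAdef
    unfolding hB hC Z_def nf_mult1 F_nf nf_F nf_add nf_diff nf_sum
    apply (rule nf_cong)
    subgoal apply (rule ext) subgoal for n using key[of n] by simp algebra done
    subgoal apply (rule ext) subgoal for n unfolding sa1 sw1 using q2[of n] q2[of "n+1"] q4[of n] dd[of n] by algebra done
    subgoal apply (rule ext) subgoal for n unfolding s3a s3w \<kappa>_def by algebra done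
    subgoal apply (rule ext) subgoal for n unfolding sa2 sw2 using q2[of n] q2[of "n+1"] q4[of n] dd[of n] by algebra done
    subgoal apply (rule ext) subgoal for n using key[of n] by simp algebra done
    done
qed
end
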